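(* Let $\bm{N}=(N_0,\ldots,N_{n-1},-\sum_iN_i)$ and $\bm{M}=(M_0,\ldots,M_{n-1},-\sum_iM_i)$ with all $N_i,M_i\in\mathbb{Z}_{\ge0}$ and $N_i\ge M_i$ for every $i$. Then $K_n(\bm{N})\ge K_n(\bm{M})$.
   Context: $K_n(\bm{N})$ is the number of integer vectors $(f_{ij})_{0\le i<j\le n}\in\mathbb{Z}_{\ge0}^{\binom{n+1}{2}}$ with $\sum_{j>i} f_{ij}-\sum_{k<i} f_{ki}=N_i$ for every $i\in\{0,\ldots,n\}$. *)

theory Defs
  imports Main
begin

text \<open>Flows f, indexed by pairs (i,j) with 0 <= i < j <= n, represented as functions
  nat \<times> nat \<Rightarrow> nat that vanish outside that index set.\<close>

definition flows :: "nat \<Rightarrow> (nat \<Rightarrow> int) \<Rightarrow> (nat \<times> nat \<Rightarrow> nat) set" where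
  "flows n N = {f. (\<forall>i j. \<not> (i < j \<and> j \<le> n) \<longrightarrow> f (i, j) = 0) \<and>
     (\<forall>i\<le>n. (\<Sum>j\<in>{i<..n}. int (f (i, j))) - (\<Sum>k<i. int (f (k, i))) = N i)}"

definition K :: "nat \<Rightarrow> (nat \<Rightarrow> int) \<Rightarrow> nat" where
  "K n N = card (flows n N)"

end

theory Submission
  imports Defs
begin

lemma flows_weight:
  assumes f: "f \<in> flows n N"
  shows "(\<Sum>i\<le>n. \<Sum>j\<le>n. int (f (i,j)) * (int j - int i)) = (\<Sum>i\<le>n. (int n - int i) * N i)"
proof -
  have z: "\<And>i j. \<not> (i < j \<and> j \<le> n) \<Longrightarrow> f (i, j) = 0" and
       c: "\<And>i. i \<le> n \<Longrightarrow> (\<Sum>j\<in>{i<..n}. int (f (i, j))) - (\<Sum>k<i. int (f (k, i))) = N i"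
    using f unfolding flows_def by auto
  have a: "(\<Sum>j\<in>{i<..n}. int (f (i, j))) = (\<Sum>j\<le>n. int (f (i, j)))" if "i \<le> n" for i
    by (rule sum.mono_neutral_left) (auto simp: z)
  have b: "(\<Sum>k<i. int (f (k, i))) = (\<Sum>k\<le>n. int (f (k, i)))" if "i \<le> n" for i
    using that by (intro sum.mono_neutral_left) (auto simp: z)
  have "(\<Sum>i\<le>n. (int n - int i) * N i) =
        (\<Sum>i\<le>n. (int n - int i) * ((\<Sum>j\<le>n. int (f (i, j))) - (\<Sum>k\<le>n. int (f (k, i)))))"
    by (intro sum.cong refl) (simp add: c[symmetric] a b)
  also have "\<dots> = (\<Sum>i\<le>n. \<Sum>j\<le>n. (int n - int i) * int (f (i, j)))
      - (\<Sum>i\<le>n. \<Sum>k\<le>n. (int n - int i) * int (f (k, i)))"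
    by (simp add: right_diff_distrib sum_distrib_left sum_subtractf)
  also have "(\<Sum>i\<le>n. \<Sum>k\<le>n. (int n - int i) * int (f (k, i)))
      = (\<Sum>k\<le>n. \<Sum>i\<le>n. (int n - int i) * int (f (k, i)))"
    by (rule sum.swap)
  also have "(\<Sum>i\<le>n. \<Sum>j\<le>n. (int n - int i) * int (f (i, j))) - (\<Sum>k\<le>n. \<Sum>i\<le>n. (int n - int i) * int (f (k, i)))
      = (\<Sum>i\<le>n. \<Sum>j\<le>n. (int n - int i) * int (f (i, j)) - (int n - int j) * int (f (i, j)))"
    by (simp add: sum_subtractf)
  also have "\<dots> = (\<Sum>i\<le>n. \<Sum>j\<le>n. int (f (i,j)) * (int j - int i))"
    by (intro sum.cong refl) (simp add: algebra_simps)
  finally show ?thesis by simp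
qed

lemma flows_bound:
  assumes f: "f \<in> flows n N" and "a \<le> n" "b \<le> n"
  shows "int (f (a,b)) \<le> (\<Sum>i\<le>n. (int n - int i) * N i)"
proof -
  have z: "\<And>i j. \<not> (i < j \<and> j \<le> n) \<Longrightarrow> f (i, j) = 0"
    using f unfolding flows_def by auto
  have "int (f (a,b)) \<le> (\<Sum>j\<le>n. int (f (a,j)))"
    using assms by (intro member_le_sum) auto
  also have "\<dots> \<le> (\<Sum>i\<le>n. \<Sum>j\<le>n. int (f (i,j)))"
    using assms by (intro member_le_sum[where f = "\<lambda>i. \<Sum>j\<le>n. int (f (i,j))"]) (auto intro: sum_nonneg)
  also have "\<dots> \<le> (\<Sum>i\<le>n. \<Sum>j\<le>n. int (f (i,j)) * (int j - int i))"
  proof (intro sum_mono)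
    fix i j assume "i \<in> {..n}" "j \<in> {..n}"
    show "int (f (i,j)) \<le> int (f (i,j)) * (int j - int i)"
    proof (cases "i < j")
      case True
      then have "1 \<le> int j - int i" by simp
      then show ?thesis using mult_left_mono[of 1 "int j - int i" "int (f (i,j))"] by simp
    next
      case False then show ?thesis using z by simp
    qed
  qed
  also have "\<dots> = (\<Sum>i\<le>n. (int n - int i) * N i)" by (rule flows_weight[OF f])
  finally show ?thesis .
qed

lemma flows_finite: "finite (flows n N)"
proof -
  define C where "C = (\<Sum>i\<le>n. (int n - int i) * N i)"
  have "flows n N \<subseteq> {f. \<forall>x. (x \<in> {..n}\<times>{..n} \<longrightarrow> f x \<in> {0..nat C}) \<and> (x \<notin> {..n}\<times>{..n} \<longrightarrow> f x = 0)}"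
  proof (intro subsetI CollectI allI conjI impI)
    fix f x assume f: "f \<in> flows n N" and x: "x \<in> {..n}\<times>{..n}"
    obtain a b where ab: "x = (a,b)" by (cases x)
    have "int (f (a,b)) \<le> C" using flows_bound[OF f, of a b] x ab unfolding C_def by auto
    then show "f x \<in> {0..nat C}" using ab by simp
  next
    fix f x assume f: "f \<in> flows n N" and x: "x \<notin> {..n}\<times>{..n}"
    obtain a b where ab: "x = (a,b)" by (cases x)
    show "f x = 0" using f x ab unfolding flows_def by auto
  qed
  moreover have "finite {f. \<forall>x. (x \<in> {..n}\<times>{..n} \<longrightarrow> f x \<in> {0..nat C}) \<and> (x \<notin> {..n}\<times>{..n} \<longrightarrow> f x = (0::nat))}"
    using finite_set_of_finite_funs[of "{..n}\<times>{..n}" "{0..nat C}" 0] by simp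
  ultimately show ?thesis by (rule finite_subset)
qed

theorem corollary2p9:
  fixes n :: nat and N M :: "nat \<Rightarrow> int"
  assumes "\<forall>i<n. 0 \<le> M i \<and> M i \<le> N i"
    and "N n = - (\<Sum>i<n. N i)"
    and "M n = - (\<Sum>i<n. M i)"
  shows "K n N \<ge> K n M"
proof -
  define D where "D i = nat (N i - M i)" for i
  have D: "i < n \<Longrightarrow> int (D i) = N i - M i" for i using assms(1) by (auto simp: D_def)
  define g where "g f = (\<lambda>(i,j). if j = n \<and> i < n then f (i,j) + D i else f (i,j))" for f :: "nat \<times> nat \<Rightarrow> nat"
  have inj: "inj_on g (flows n M)"
  proof (rule inj_onI)
    fix f h assume "g f = g h"
    show "f = h"
    proof
      fix p show "f p = h p"
        using fun_cong[OF \<open>g f = g h\<close>, of p] by (cases p) (auto simp: g_def split: if_splits)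
    qed
  qed
  have img: "g ` flows n M \<subseteq> flows n N"
  proof safe
    fix f assume f: "f \<in> flows n M"
    have z: "\<And>i j. \<not> (i < j \<and> j \<le> n) \<Longrightarrow> f (i, j) = 0" and
       c: "\<And>i. i \<le> n \<Longrightarrow> (\<Sum>j\<in>{i<..n}. int (f (i, j))) - (\<Sum>k<i. int (f (k, i))) = M i"
      using f unfolding flows_def by auto
    show "g f \<in> flows n N" unfolding flows_def
    proof (intro CollectI conjI allI impI)
      fix i j assume "\<not> (i < j \<and> j \<le> n)" then show "g f (i,j) = 0" using z by (auto simp: g_def)
    next
      fix i assume i: "i \<le> n"
      show "(\<Sum>j\<in>{i<..n}. int (g f (i, j))) - (\<Sum>k<i. int (g f (k, i))) = N i"
      proof (cases "i < n")
        case True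
        have 1: "(\<Sum>j\<in>{i<..n}. int (g f (i, j))) = (\<Sum>j\<in>{i<..n}. int (f (i, j)) + (if j = n then int (D i) else 0))"
          using True by (intro sum.cong refl) (auto simp: g_def)
        have 2: "(\<Sum>j\<in>{i<..n}. (if j = n then int (D i) else 0)) = int (D i)"
          using True by (simp add: sum.delta)
        have 3: "(\<Sum>k<i. int (g f (k, i))) = (\<Sum>k<i. int (f (k, i)))"
          using True by (intro sum.cong refl) (auto simp: g_def)
        show ?thesis using c[OF i] D[OF True] by (simp add: 1 2 3 sum.distrib)
      next
        case False
        then have "i = n" using i by simp
        have 3: "(\<Sum>k<n. int (g f (k, n))) = (\<Sum>k<n. int (f (k, n)) + (N k - M k))"
          by (intro sum.cong refl) (auto simp: g_def D)
        have 4: "(\<Sum>k<n. (N k - M k)) = (\<Sum>k<n. N k) - (\<Sum>k<n. M k)"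
          by (simp add: sum_subtractf)
        show ?thesis using c[OF i] assms(2,3) \<open>i = n\<close> by (simp add: 3 4 sum.distrib)
      qed
    qed
  qed
  show ?thesis unfolding K_def
    by (rule card_inj_on_le[OF inj img flows_finite])
qed

end
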